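(* For every $v\in\{0,\dots,n-1\}$, every $\pi\in\Pi$ and every $f_{\mathcal E_v^+}\in\mathcal F_v$, $$\sum_{e\in\mathcal E_v^+}\sigma_e\big(\lambda^\pi_v\,G^v_e(f_{\mathcal E_v^+},\pi)-f^\pi_e\big)\le0,$$ where $\lambda^\pi_v:=\sum_{e\in\mathcal E_v^+}f^\pi_e$ and $\sigma_e:=\mathrm{sgn}(f_e-f^\pi_e)$ (with $\mathrm{sgn}(0)=0$).
   Context: $\mathcal G=(\mathcal V,\mathcal E)$ is a finite directed graph with $\mathcal V=\{0,1,\dots,n\}$, containing no directed cycle, in which node $0$ is the unique node with no incoming link, node $n$ is the unique node with no outgoing link, there is a directed path from every node to $n$, and every link $(u,v)\in\mathcal E$ satisfies $u<v$. For $v\in\mathcal V$, $\mathcal E_v^-$ and $\mathcal E_v^+$ are the sets of links entering and leaving $v$. Each link $e$ has a capacity $C_e\in(0,+\infty]$; $\mathcal F_v:=\prod_{e\in\mathcal E_v^+}[0,C_e)$. $\mathcal P$ is the set of directed paths from $0$ to $n$, $A$ the link-path incidence matrix ($A_{ep}=1$ iff $e\in p$), $\mathcal S(\cdot)$ denotes a probability simplex, $\Pi:=\{\pi\in\mathcal S(\mathcal P):(A\pi)_e<C_e\ \forall e\}$, and $f^\pi:=A\pi$. For each $v\in\{0,\dots,n-1\}$ a continuously differentiable $G^v:\mathcal F_v\times\Pi\to\mathcal S(\mathcal E_v^+)$ is given such that (consistency) $(\sum_{j\in\mathcal E_v^+}f^\pi_j)\,G^v_e(f^\pi_{\mathcal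 E_v^+},\pi)=f^\pi_e$ for all $\pi\in\Pi$, $e\in\mathcal E_v^+$, where $f^\pi_{\mathcal E_v^+}=(f^\pi_j)_{j\in\mathcal E_v^+}$; and (cooperativity) $\partial G^v_j(f_{\mathcal E_v^+},\pi)/\partial f_e\ge0$ for all $\pi\in\Pi$, $f_{\mathcal E_v^+}\in\mathcal F_v$, $j\neq e\in\mathcal E_v^+$. *)

theory Defs
  imports "HOL-Analysis.Analysis"
begin

definition out_links :: "(nat \<times> nat) set \<Rightarrow> nat \<Rightarrow> (nat \<times> nat) set" where
  "out_links E v = {e \<in> E. fst e = v}"

definition in_links :: "(nat \<times> nat) set \<Rightarrow> nat \<Rightarrow> (nat \<times> nat) set" where
  "in_links E v = {e \<in> E. snd e = v}"

definition paths :: "(nat \<times> nat) set \<Rightarrow> nat \<Rightarrow> nat list set" where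
  "paths E n = {p. p \<noteq> [] \<and> hd p = 0 \<and> last p = n \<and>
                   (\<forall>i. Suc i < length p \<longrightarrow> (p ! i, p ! Suc i) \<in> E)}"

text \<open>Links of a path (e is in p iff A_{ep} = 1).\<close>
definition path_links :: "nat list \<Rightarrow> (nat \<times> nat) set" where
  "path_links p = set (zip p (tl p))"

text \<open>Link flow f^pi = A pi.\<close>
definition link_flow :: "(nat \<times> nat) set \<Rightarrow> nat \<Rightarrow> (nat list \<Rightarrow> real) \<Rightarrow> (nat \<times> nat) \<Rightarrow> real" where
  "link_flow E n \<pi> e = (\<Sum>p\<in>paths E n. (if e \<in> path_links p then 1 else 0) * \<pi> p)"

definition Pi_feas :: "(nat \<times> nat) set \<Rightarrow> nat \<Rightarrow> ((nat \<times> nat) \<Rightarrow> ereal) \<Rightarrow> (nat list \<Rightarrow> real) set" where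
  "Pi_feas E n C = {\<pi>. (\<forall>p\<in>paths E n. 0 \<le> \<pi> p) \<and> (\<forall>p. p \<notin> paths E n \<longrightarrow> \<pi> p = 0) \<and>
       sum \<pi> (paths E n) = 1 \<and> (\<forall>e\<in>E. ereal (link_flow E n \<pi> e) < C e)}"

text \<open>F_v: vectors indexed by the outgoing links of v (extended by 0 elsewhere).\<close>
definition F_box :: "(nat \<times> nat) set \<Rightarrow> ((nat \<times> nat) \<Rightarrow> ereal) \<Rightarrow> nat \<Rightarrow> ((nat \<times> nat) \<Rightarrow> real) set" where
  "F_box E C v = {f. (\<forall>e\<in>out_links E v. 0 \<le> f e \<and> ereal (f e) < C e) \<and>
                      (\<forall>e. e \<notin> out_links E v \<longrightarrow> f e = 0)}"

definition restr_out :: "(nat \<times> nat) set \<Rightarrow> nat \<Rightarrow> ((nat \<times> nat) \<Rightarrow> real) \<Rightarrow> (nat \<times> nat) \<Rightarrow> real" where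
  "restr_out E v f = (\<lambda>e. if e \<in> out_links E v then f e else 0)"

text \<open>Partial derivative of G^v_j with respect to f_e (one-sided at the boundary of F_v).\<close>
definition partial_G ::
  "((nat \<times> nat) \<Rightarrow> ereal) \<Rightarrow> (nat \<Rightarrow> ((nat \<times> nat) \<Rightarrow> real) \<Rightarrow> (nat list \<Rightarrow> real) \<Rightarrow> (nat \<times> nat) \<Rightarrow> real)
    \<Rightarrow> nat \<Rightarrow> (nat \<times> nat) \<Rightarrow> (nat \<times> nat) \<Rightarrow> ((nat \<times> nat) \<Rightarrow> real) \<Rightarrow> (nat list \<Rightarrow> real) \<Rightarrow> real" where
  "partial_G C G v j e f \<pi> =
     vector_derivative (\<lambda>t. G v (f(e := t)) \<pi> j) (at (f e) within {t. 0 \<le> t \<and> ereal t < C e})"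

end

theory Submission
  imports Defs
begin


lemma mono1:
  fixes g g' :: "real \<Rightarrow> real" and S :: "real set"
  assumes d: "\<And>t. t \<in> S \<Longrightarrow> (g has_vector_derivative g' t) (at t within S)"
    and nn: "\<And>t. t \<in> S \<Longrightarrow> 0 \<le> g' t"
    and sub: "{a..b} \<subseteq> S" and ab: "a \<le> b"
  shows "g a \<le> g b"
proof -
  have "\<exists>x\<in>{a..b}. g b - g a = (\<lambda>h. h *\<^sub>R g' x) (b - a)"
    apply (rule mvt_very_simple[OF ab])
    using d sub unfolding has_vector_derivative_def
    by (meson atLeastAtMost_iff has_derivative_subset subsetD)
  then obtain x where "x \<in> {a..b}" "g b - g a = (b - a) * g' x" by auto
  moreover have "0 \<le> g' x" using nn sub \<open>x \<in> {a..b}\<close> by auto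
  ultimately show ?thesis using ab by (smt (verit) mult_nonneg_nonneg)
qed

theorem lemma1:
  fixes n :: nat and E :: "(nat \<times> nat) set" and C :: "(nat \<times> nat) \<Rightarrow> ereal"
    and G :: "nat \<Rightarrow> ((nat \<times> nat) \<Rightarrow> real) \<Rightarrow> (nat list \<Rightarrow> real) \<Rightarrow> (nat \<times> nat) \<Rightarrow> real"
  assumes nodes: "E \<subseteq> {0..n} \<times> {0..n}"
    and order: "\<forall>(u, w) \<in> E. u < w"
    and source: "\<forall>w\<in>{0..n}. in_links E w = {} \<longleftrightarrow> w = 0"
    and sink: "\<forall>w\<in>{0..n}. out_links E w = {} \<longleftrightarrow> w = n"
    and reach: "\<forall>w\<in>{0..n}. (w, n) \<in> E\<^sup>*"
    and cap: "\<forall>e\<in>E. 0 < C e"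
    and G_simplex: "\<forall>v<n. \<forall>f\<in>F_box E C v. \<forall>\<pi>\<in>Pi_feas E n C.
         (\<forall>e\<in>out_links E v. 0 \<le> G v f \<pi> e) \<and> (\<Sum>e\<in>out_links E v. G v f \<pi> e) = 1"
    and G_cont: "\<forall>v<n. \<forall>j\<in>out_links E v.
         continuous_on (F_box E C v \<times> Pi_feas E n C) (\<lambda>(f, \<pi>). G v f \<pi> j)"
    and G_diff: "\<forall>v<n. \<forall>j\<in>out_links E v. \<forall>e\<in>out_links E v.
         (\<forall>f\<in>F_box E C v. \<forall>\<pi>\<in>Pi_feas E n C.
            (\<lambda>t. G v (f(e := t)) \<pi> j) differentiable (at (f e) within {t. 0 \<le> t \<and> ereal t < C e})) \<and>
         continuous_on (F_box E C v \<times> Pi_feas E n C) (\<lambda>(f, \<pi>). partial_G C G v j e f \<pi>)"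
    and consistency: "\<forall>v<n. \<forall>\<pi>\<in>Pi_feas E n C. \<forall>e\<in>out_links E v.
         (\<Sum>j\<in>out_links E v. link_flow E n \<pi> j) * G v (restr_out E v (link_flow E n \<pi>)) \<pi> e
           = link_flow E n \<pi> e"
    and cooperativity: "\<forall>v<n. \<forall>\<pi>\<in>Pi_feas E n C. \<forall>f\<in>F_box E C v. \<forall>j\<in>out_links E v. \<forall>e\<in>out_links E v.
         j \<noteq> e \<longrightarrow> 0 \<le> partial_G C G v j e f \<pi>"
  shows "\<forall>v<n. \<forall>\<pi>\<in>Pi_feas E n C. \<forall>f\<in>F_box E C v.
     (\<Sum>e\<in>out_links E v. sgn (f e - link_flow E n \<pi> e) *
        ((\<Sum>j\<in>out_links E v. link_flow E n \<pi> j) * G v f \<pi> e - link_flow E n \<pi> e)) \<le> 0"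
proof (intro allI impI ballI)
  fix v \<pi> f
  assume v: "v < n" and pi: "\<pi> \<in> Pi_feas E n C" and fF: "f \<in> F_box E C v"
  define Ov where "Ov = out_links E v"
  have finE: "finite E" using nodes finite_subset by blast
  have finO: "finite Ov" unfolding Ov_def out_links_def using finE by simp
  have OE: "Ov \<subseteq> E" unfolding Ov_def out_links_def by auto
  have Fmem: "h \<in> F_box E C v \<longleftrightarrow> (\<forall>e\<in>Ov. 0 \<le> h e \<and> ereal (h e) < C e) \<and> (\<forall>e. e \<notin> Ov \<longrightarrow> h e = 0)" for h
    unfolding F_box_def Ov_def by simp
  have step: "G v f1 \<pi> j \<le> G v (f1(k := t)) \<pi> j"
    if f1: "f1 \<in> F_box E C v" and k: "k \<in> Ov" and j: "j \<in> Ov" and jk: "j \<noteq> k"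
      and t0: "f1 k \<le> t" and tC: "ereal t < C k" for f1 k j t
  proof -
    define S where "S = {t. 0 \<le> t \<and> ereal t < C k}"
    define g where "g = (\<lambda>s. G v (f1(k := s)) \<pi> j)"
    have inF: "f1(k := s) \<in> F_box E C v" if "s \<in> S" for s
      using f1 that k unfolding Fmem S_def by auto
    have der: "(g has_vector_derivative partial_G C G v j k (f1(k := s)) \<pi>) (at s within S)"
      if s: "s \<in> S" for s
    proof -
      have "(\<lambda>t. G v ((f1(k := s))(k := t)) \<pi> j) differentiable (at ((f1(k := s)) k) within {t. 0 \<le> t \<and> ereal t < C k})"
        using G_diff v j k inF[OF s] pi unfolding Ov_def by blast
      hence "g differentiable (at s within S)" unfolding g_def S_def by simp
      hence "(g has_vector_derivative vector_derivative g (at s within S)) (at s within S)"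
        using vector_derivative_works by blast
      moreover have "vector_derivative g (at s within S) = partial_G C G v j k (f1(k := s)) \<pi>"
        unfolding partial_G_def g_def S_def by simp
      ultimately show ?thesis by simp
    qed
    have nn: "0 \<le> partial_G C G v j k (f1(k := s)) \<pi>" if s: "s \<in> S" for s
      using cooperativity v pi inF[OF s] j k jk unfolding Ov_def by blast
    have f1k: "0 \<le> f1 k" using f1 k unfolding Fmem by auto
    have sub: "{f1 k..t} \<subseteq> S" unfolding S_def using f1k tC
      by (auto intro: le_less_trans[of _ "ereal t"])
    have "g (f1 k) \<le> g t" by (rule mono1[OF der nn sub t0])
    thus ?thesis unfolding g_def by simp
  qed
  have ind: "\<forall>f1 f2. f1 \<in> F_box E C v \<and> f2 \<in> F_box E C v \<and> (\<forall>e. f1 e \<le> f2 e) \<and> (\<forall>e. e \<notin> K \<longrightarrow> f1 e = f2 e)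
       \<longrightarrow> K \<subseteq> Ov \<longrightarrow> (\<forall>j\<in>Ov - K. G v f1 \<pi> j \<le> G v f2 \<pi> j)" if "finite K" for K
    using that
  proof (induction K rule: finite_induct)
    case empty
    then show ?case
    proof (intro allI impI ballI)
      fix f1 f2 j assume "f1 \<in> F_box E C v \<and> f2 \<in> F_box E C v \<and> (\<forall>e. f1 e \<le> f2 e) \<and> (\<forall>e. e \<notin> {} \<longrightarrow> f1 e = f2 e)"
      hence "f1 = f2" by auto
      thus "G v f1 \<pi> j \<le> G v f2 \<pi> j" by simp
    qed
  next
    case (insert k K)
    show ?case
    proof (intro allI impI ballI)
      fix f1 f2 j
      assume H: "f1 \<in> F_box E C v \<and> f2 \<in> F_box E C v \<and> (\<forall>e. f1 e \<le> f2 e) \<and> (\<forall>e. e \<notin> insert k K \<longrightarrow> f1 e = f2 e)"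
        and KO: "insert k K \<subseteq> Ov" and j: "j \<in> Ov - insert k K"
      define fm where "fm = f1(k := f2 k)"
      have kO: "k \<in> Ov" using KO by auto
      have fmF: "fm \<in> F_box E C v" using H kO unfolding Fmem fm_def by auto
      have "G v f1 \<pi> j \<le> G v fm \<pi> j" unfolding fm_def
        apply (rule step)
        using H kO j unfolding Fmem by blast+
      also have "\<dots> \<le> G v f2 \<pi> j"
        using insert.IH[rule_format, of fm f2 j] fmF H KO j unfolding fm_def by auto
      finally show "G v f1 \<pi> j \<le> G v f2 \<pi> j" .
    qed
  qed
  define fp where "fp = restr_out E v (link_flow E n \<pi>)"
  have lf_nn: "0 \<le> link_flow E n \<pi> e" for e
    using pi unfolding Pi_feas_def link_flow_def by (auto intro!: sum_nonneg)
  have fpF: "fp \<in> F_box E C v"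
    using pi OE lf_nn unfolding Fmem fp_def restr_out_def Pi_feas_def Ov_def[symmetric] by auto
  define fmin where "fmin = (\<lambda>e. min (f e) (fp e))"
  define fmax where "fmax = (\<lambda>e. max (f e) (fp e))"
  have fminF: "fmin \<in> F_box E C v" using fF fpF unfolding Fmem fmin_def
    by (auto simp: min_def)
  have fmaxF: "fmax \<in> F_box E C v" using fF fpF unfolding Fmem fmax_def
    by (auto simp: max_def)
  define Ip where "Ip = {e\<in>Ov. fp e < f e}"
  define Im where "Im = {e\<in>Ov. f e < fp e}"
  have finIp: "finite Ip" and finIm: "finite Im" using finO unfolding Ip_def Im_def by auto
  have IpO: "Ip \<subseteq> Ov" and ImO: "Im \<subseteq> Ov" unfolding Ip_def Im_def by auto
  have off: "e \<notin> Ov \<Longrightarrow> f e = fp e" for e using fF fpF unfolding Fmem by metis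
  have hyps: "(\<forall>e. fmin e \<le> fp e) \<and> (\<forall>e. e \<notin> Im \<longrightarrow> fmin e = fp e)"
     "(\<forall>e. fmin e \<le> f e) \<and> (\<forall>e. e \<notin> Ip \<longrightarrow> fmin e = f e)"
     "(\<forall>e. fp e \<le> fmax e) \<and> (\<forall>e. e \<notin> Ip \<longrightarrow> fp e = fmax e)"
     "(\<forall>e. f e \<le> fmax e) \<and> (\<forall>e. e \<notin> Im \<longrightarrow> f e = fmax e)"
    unfolding fmin_def fmax_def Ip_def Im_def using off by (auto simp: min_def max_def)
  have a: "\<forall>j\<in>Ov - Im. G v fmin \<pi> j \<le> G v fp \<pi> j"
    using ind[OF finIm] fminF fpF hyps(1) ImO by blast
  have b: "\<forall>j\<in>Ov - Ip. G v fmin \<pi> j \<le> G v f \<pi> j"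
    using ind[OF finIp] fminF fF hyps(2) IpO by blast
  have c: "\<forall>j\<in>Ov - Ip. G v fp \<pi> j \<le> G v fmax \<pi> j"
    using ind[OF finIp] fmaxF fpF hyps(3) IpO by blast
  have d: "\<forall>j\<in>Ov - Im. G v f \<pi> j \<le> G v fmax \<pi> j"
    using ind[OF finIm] fmaxF fF hyps(4) ImO by blast
  have sum1: "(\<Sum>e\<in>Ov. G v h \<pi> e) = 1" if "h \<in> F_box E C v" for h
    using G_simplex v pi that unfolding Ov_def by blast
  have split: "(\<Sum>e\<in>Ov. G v h \<pi> e) = (\<Sum>e\<in>I. G v h \<pi> e) + (\<Sum>e\<in>Ov - I. G v h \<pi> e)"
    if "I \<subseteq> Ov" for h I
    using sum.subset_diff[OF that finO] by (simp add: add.commute)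
  have P: "(\<Sum>e\<in>Ip. G v f \<pi> e) \<le> (\<Sum>e\<in>Ip. G v fp \<pi> e)"
  proof -
    have "(\<Sum>e\<in>Ip. G v f \<pi> e) = 1 - (\<Sum>e\<in>Ov - Ip. G v f \<pi> e)"
      using split[OF IpO, of f] sum1[OF fF] by simp
    also have "\<dots> \<le> 1 - (\<Sum>e\<in>Ov - Ip. G v fmin \<pi> e)"
      using b by (metis sum_mono diff_left_mono)
    also have "\<dots> = (\<Sum>e\<in>Ip. G v fmin \<pi> e)"
      using split[OF IpO, of fmin] sum1[OF fminF] by simp
    also have "\<dots> \<le> (\<Sum>e\<in>Ip. G v fp \<pi> e)"
      using a unfolding Ip_def Im_def by (intro sum_mono) auto
    finally show ?thesis .
  qed
  have M: "(\<Sum>e\<in>Im. G v fp \<pi> e) \<le> (\<Sum>e\<in>Im. G v f \<pi> e)"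
  proof -
    have "(\<Sum>e\<in>Im. G v fp \<pi> e) \<le> (\<Sum>e\<in>Im. G v fmax \<pi> e)"
      using c unfolding Ip_def Im_def by (intro sum_mono) auto
    also have "\<dots> = 1 - (\<Sum>e\<in>Ov - Im. G v fmax \<pi> e)"
      using split[OF ImO, of fmax] sum1[OF fmaxF] by simp
    also have "\<dots> \<le> 1 - (\<Sum>e\<in>Ov - Im. G v f \<pi> e)"
      using d by (metis sum_mono diff_left_mono)
    also have "\<dots> = (\<Sum>e\<in>Im. G v f \<pi> e)"
      using split[OF ImO, of f] sum1[OF fF] by simp
    finally show ?thesis .
  qed
  define lam where "lam = (\<Sum>j\<in>Ov. link_flow E n \<pi> j)"
  have lam0: "0 \<le> lam" unfolding lam_def using lf_nn by (simp add: sum_nonneg)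
  have cons: "link_flow E n \<pi> e = lam * G v fp \<pi> e" if "e \<in> Ov" for e
    using consistency v pi that unfolding lam_def fp_def Ov_def by metis
  have fpO: "fp e = link_flow E n \<pi> e" if "e \<in> Ov" for e
    using that unfolding fp_def restr_out_def Ov_def by simp
  have "(\<Sum>e\<in>Ov. sgn (f e - link_flow E n \<pi> e) * (lam * G v f \<pi> e - link_flow E n \<pi> e))
      = (\<Sum>e\<in>Ov. (if e \<in> Ip then lam * (G v f \<pi> e - G v fp \<pi> e) else 0)
               + (if e \<in> Im then lam * (G v fp \<pi> e - G v f \<pi> e) else 0))"
  proof (rule sum.cong[OF refl])
    fix e assume e: "e \<in> Ov"
    show "sgn (f e - link_flow E n \<pi> e) * (lam * G v f \<pi> e - link_flow E n \<pi> e)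
      = (if e \<in> Ip then lam * (G v f \<pi> e - G v fp \<pi> e) else 0)
               + (if e \<in> Im then lam * (G v fp \<pi> e - G v f \<pi> e) else 0)"
      using e cons[OF e] fpO[OF e] unfolding Ip_def Im_def
      by (auto simp: sgn_if algebra_simps)
  qed
  also have "\<dots> = lam * (\<Sum>e\<in>Ip. G v f \<pi> e - G v fp \<pi> e) + lam * (\<Sum>e\<in>Im. G v fp \<pi> e - G v f \<pi> e)"
    using IpO ImO finO
    by (simp add: sum.distrib sum.inter_restrict[symmetric] sum_distrib_left Int_absorb1 Int_absorb2)
  also have "\<dots> \<le> 0"
    using P M lam0 by (simp add: sum_subtractf mult_nonneg_nonpos add_nonpos_nonpos)
  finally show "(\<Sum>e\<in>out_links E v. sgn (f e - link_flow E n \<pi> e) *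
        ((\<Sum>j\<in>out_links E v. link_flow E n \<pi> j) * G v f \<pi> e - link_flow E n \<pi> e)) \<le> 0"
    unfolding lam_def Ov_def .
qed

end
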